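(* Let $\mathbb{Y},\mathbb{T}$ be sets, let $\underline{\mathsf{P}}_{Y,\Theta}$ be a coherent lower prevision on the bounded gambles on $\mathbb{Y}\times\mathbb{T}$ with conjugate upper prevision $\overline{\mathsf{P}}_{Y,\Theta}$, and let $y\mapsto(\underline{\Pi}_y,\overline{\Pi}_y)$ be an inferential model. Suppose the IM is invulnerable, i.e., for every $H\subseteq\mathbb{T}$ and $\beta\in[0,1]$, the gamble $f^{H,\beta}(y,\theta)=\{1(\theta\in H)-\beta\}\,1\{\underline{\Pi}_y(H)>\beta\}$ satisfies $\underline{\mathsf{P}}_{Y,\Theta}(f^{H,\beta})\ge0$. Then the IM is valid, i.e., $$\overline{\mathsf{P}}_{Y,\Theta}\bigl(\{(y,\theta):\underline{\Pi}_y(H)>1-\alpha,\ \theta\notin H\}\bigr)\le\alpha\quad\text{for all }H\subseteq\mathbb{T},\ \alpha\in[0,1].$$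
   Context: A lower prevision $\underline{\mathsf{P}}$ on the linear space of bounded gambles on a set $\Omega$ is coherent if for all integers $m,K\ge0$ and all bounded gambles $f_0,\dots,f_K$, $\sup_{\omega}\bigl[\sum_{k=1}^K\{f_k(\omega)-\underline{\mathsf{P}}(f_k)\}-m\{f_0(\omega)-\underline{\mathsf{P}}(f_0)\}\bigr]\ge0$; its conjugate upper prevision is $\overline{\mathsf{P}}(f)=-\underline{\mathsf{P}}(-f)$, and for a set $B$, $\overline{\mathsf{P}}(B)=\overline{\mathsf{P}}(1_B)$. An inferential model (IM) is a map $y\mapsto(\underline{\Pi}_y,\overline{\Pi}_y)$ assigning to each $y\in\mathbb{Y}$ a coherent lower prevision $\underline{\Pi}_y$ (with conjugate upper prevision $\overline{\Pi}_y$) on bounded gambles on $\mathbb{T}$; $\underline{\Pi}_y(H)=\underline{\Pi}_y(1_H)$ for $H\subseteq\mathbb{T}$. *)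

theory Defs
  imports Main "HOL.Real"
begin

text \<open>A lower prevision is a real functional on gambles; only its values on bounded
gambles matter.\<close>

definition bounded_gamble :: "('w \<Rightarrow> real) \<Rightarrow> bool" where
  "bounded_gamble f \<longleftrightarrow> (\<exists>B. \<forall>w. \<bar>f w\<bar> \<le> B)"

definition coherent_lower_prevision :: "(('w \<Rightarrow> real) \<Rightarrow> real) \<Rightarrow> bool" where
  "coherent_lower_prevision LP \<longleftrightarrow>
     (\<forall>(m::nat) (K::nat) (f :: nat \<Rightarrow> 'w \<Rightarrow> real).
        (\<forall>k\<le>K. bounded_gamble (f k)) \<longrightarrow>
        0 \<le> (SUP w. (\<Sum>k=1..K. f k w - LP (f k)) - real m * (f 0 w - LP (f 0))))"

definition upper_prevision :: "(('w \<Rightarrow> real) \<Rightarrow> real) \<Rightarrow> ('w \<Rightarrow> real) \<Rightarrow> real" where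
  "upper_prevision LP f = - LP (\<lambda>w. - f w)"

definition ind :: "'w set \<Rightarrow> 'w \<Rightarrow> real" where
  "ind B w = (if w \<in> B then 1 else 0)"

definition inferential_model :: "('y \<Rightarrow> ('t \<Rightarrow> real) \<Rightarrow> real) \<Rightarrow> bool" where
  "inferential_model Pi \<longleftrightarrow> (\<forall>y. coherent_lower_prevision (Pi y))"

definition invulnerable ::
  "((('y \<times> 't) \<Rightarrow> real) \<Rightarrow> real) \<Rightarrow> ('y \<Rightarrow> ('t \<Rightarrow> real) \<Rightarrow> real) \<Rightarrow> bool" where
  "invulnerable P Pi \<longleftrightarrow>
     (\<forall>(H::'t set) (\<beta>::real). 0 \<le> \<beta> \<and> \<beta> \<le> 1 \<longrightarrow>
        0 \<le> P (\<lambda>(y, \<theta>). (ind H \<theta> - \<beta>) * ind {y. Pi y (ind H) > \<beta>} y))"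

definition valid_IM ::
  "((('y \<times> 't) \<Rightarrow> real) \<Rightarrow> real) \<Rightarrow> ('y \<Rightarrow> ('t \<Rightarrow> real) \<Rightarrow> real) \<Rightarrow> bool" where
  "valid_IM P Pi \<longleftrightarrow>
     (\<forall>(H::'t set) (\<alpha>::real). 0 \<le> \<alpha> \<and> \<alpha> \<le> 1 \<longrightarrow>
        upper_prevision P (ind {(y, \<theta>). Pi y (ind H) > 1 - \<alpha> \<and> \<theta> \<notin> H}) \<le> \<alpha>)"

end

theory Submission
  imports Defs
begin

theorem proposition3:
  fixes P :: "(('y \<times> 't) \<Rightarrow> real) \<Rightarrow> real"
    and Pi :: "'y \<Rightarrow> ('t \<Rightarrow> real) \<Rightarrow> real"
  assumes "coherent_lower_prevision P"
    and "inferential_model Pi"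
    and "invulnerable P Pi"
  shows "valid_IM P Pi"
  unfolding valid_IM_def
proof (intro allI impI)
  fix H :: "'t set" and \<alpha> :: real
  assume a: "0 \<le> \<alpha> \<and> \<alpha> \<le> 1"
  define A where "A = {(y, \<theta>). Pi y (ind H) > 1 - \<alpha> \<and> \<theta> \<notin> H}"
  define g where "g = (\<lambda>(y, \<theta>). (ind H \<theta> - (1 - \<alpha>)) * ind {y. Pi y (ind H) > 1 - \<alpha>} y)"
  define h where "h = (\<lambda>w. - ind A w)"
  have Pg: "0 \<le> P g" using assms(3) a unfolding invulnerable_def g_def by auto
  define F where "F = (\<lambda>k::nat. if k = 0 then h else g)"
  have bF: "\<forall>k\<le>1. bounded_gamble (F k)"
    unfolding F_def bounded_gamble_def h_def g_def ind_def
    using a by (intro allI impI exI[of _ 2]) (auto split: prod.splits)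
  have "0 \<le> (SUP w. (\<Sum>k=1..1. F k w - P (F k)) - real 1 * (F 0 w - P (F 0)))"
    using assms(1) bF unfolding coherent_lower_prevision_def by blast
  also have "\<dots> \<le> \<alpha> - P g + P h"
  proof (rule cSUP_least)
    fix w :: "'y \<times> 't"
    have "g w + ind A w \<le> \<alpha>"
      using a unfolding g_def A_def ind_def by (auto split: prod.splits)
    then show "(\<Sum>k=1..1. F k w - P (F k)) - real 1 * (F 0 w - P (F 0)) \<le> \<alpha> - P g + P h"
      by (simp add: F_def h_def)
  qed simp
  finally have "- P h \<le> \<alpha>" using Pg by linarith
  then show "upper_prevision P (ind {(y, \<theta>). Pi y (ind H) > 1 - \<alpha> \<and> \<theta> \<notin> H}) \<le> \<alpha>"
    unfolding upper_prevision_def h_def A_def .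
qed

end
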